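(* Assume Hypothesis (H$_1$) (i.e. $|f'|$ is $(\alpha,m)$-convex on $[ma,b]$). Then for all $x\in[a,b]$, $\lambda\in[0,1]$ and $\theta>0$, $$\big|S_f(mx,\lambda,\theta,ma,mb)\big|\le\frac{m^\theta}{b-a}\Big\{(x-a)^{\theta+1}\Big(|f'(mx)|A_2(\alpha,\theta,\lambda)+m|f'(a)|A_3(\alpha,\theta,\lambda)\Big)+(b-x)^{\theta+1}\Big(|f'(mx)|A_2(\alpha,\theta,\lambda)+m|f'(b)|A_3(\alpha,\theta,\lambda)\Big)\Big\}.$$
   Context: Let $\Gamma$ denote Euler's Gamma function. Given $m\in(0,1]$, $a<b$, $x\in[a,b]$, $\lambda\in[0,1]$, $\theta>0$ and a function $f$ integrable on $[ma,mb]$, the Riemann–Liouville fractional integrals appearing below are $J^\theta_{(mx)^-}f(ma)=\frac{1}{\Gamma(\theta)}\int_{ma}^{mx}(s-ma)^{\theta-1}f(s)\,ds$ and $J^\theta_{(mx)^+}f(mb)=\frac{1}{\Gamma(\theta)}\int_{mx}^{mb}(mb-s)^{\theta-1}f(s)\,ds$ (each equal to $0$ if its interval of integration is degenerate), and $$S_f(mx,\lambda,\theta,ma,mb)=(1-\lambda)m^{\theta-1}\frac{(x-a)^\theta+(b-x)^\theta}{b-a}f(mx)+\lambda m^{\theta-1}\frac{(x-a)^\theta f(ma)+(b-x)^\theta f(mb)}{b-a}-\frac{\Gamma(\theta+1)}{m(b-a)}\Big[J^\theta_{(mx)^-}f(ma)+J^\theta_{(mx)^+}f(mb)\Big].$$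 $(\alpha,m)$-convexity: for $(\alpha,m)\in[0,1]\times(0,1]$ and an interval $K\subseteq[0,\infty)$, a function $g:K\to\mathbb{R}$ is $(\alpha,m)$-convex on $K$ if $g(tX+m(1-t)Y)\le t^\alpha g(X)+m(1-t^\alpha)g(Y)$ for all $X,Y\in K$ and $t\in[0,1]$ with $tX+m(1-t)Y\in K$ (convention $0^0=1$). Hypothesis (H$_q$): $I\subseteq[0,\infty)$ is an interval, $f:I\to\mathbb{R}$ is differentiable on the interior $I^\circ$, $m\in(0,1]$, $\alpha\in[0,1]$, $a<b$ with $ma,b\in I^\circ$, $f'$ is Lebesgue integrable on $[ma,mb]$, and $|f'|^q$ is $(\alpha,m)$-convex on $[ma,b]$. Constants: $A_1(\theta,\lambda)=\frac{2\theta\lambda^{1+\frac1\theta}+1}{\theta+1}-\lambda$, $A_2(\alpha,\theta,\lambda)=\frac{2\theta\lambda^{1+\frac{1+\alpha}{\theta}}}{(\alpha+1)(\alpha+\theta+1)}+\frac{1}{\alpha+\theta+1}-\frac{\lambda}{\alpha+1}$, $A_3(\alpha,\theta,\lambda)=A_1(\theta,\lambda)-A_2(\alpha,\theta,\lambda)$. *)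

theory Defs
  imports "HOL-Analysis.Analysis"
begin

text \<open>Power with the convention 0^0 = 1 (Isabelle's powr has 0 powr 0 = 0).\<close>
definition pow00 :: "real \<Rightarrow> real \<Rightarrow> real" where
  "pow00 t \<alpha> = (if t = 0 \<and> \<alpha> = 0 then 1 else t powr \<alpha>)"

definition alpha_m_convex_on :: "real \<Rightarrow> real \<Rightarrow> real set \<Rightarrow> (real \<Rightarrow> real) \<Rightarrow> bool" where
  "alpha_m_convex_on \<alpha> m K g \<longleftrightarrow>
     (\<forall>X\<in>K. \<forall>Y\<in>K. \<forall>t\<in>{0..1}. t * X + m * (1 - t) * Y \<in> K \<longrightarrow>
        g (t * X + m * (1 - t) * Y) \<le> pow00 t \<alpha> * g X + m * (1 - pow00 t \<alpha>) * g Y)"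

text \<open>Riemann--Liouville fractional integrals J^theta_{(mx)^-} f(ma) and J^theta_{(mx)^+} f(mb).\<close>
definition RL_left :: "real \<Rightarrow> (real \<Rightarrow> real) \<Rightarrow> real \<Rightarrow> real \<Rightarrow> real" where
  "RL_left \<theta> f lo hi = (1 / Gamma \<theta>) * integral {lo..hi} (\<lambda>s. (s - lo) powr (\<theta> - 1) * f s)"

definition RL_right :: "real \<Rightarrow> (real \<Rightarrow> real) \<Rightarrow> real \<Rightarrow> real \<Rightarrow> real" where
  "RL_right \<theta> f lo hi = (1 / Gamma \<theta>) * integral {lo..hi} (\<lambda>s. (hi - s) powr (\<theta> - 1) * f s)"

definition S_f :: "(real \<Rightarrow> real) \<Rightarrow> real \<Rightarrow> real \<Rightarrow> real \<Rightarrow> real \<Rightarrow> real \<Rightarrow> real \<Rightarrow> real" where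
  "S_f f m x lam \<theta> a b =
     (1 - lam) * m powr (\<theta> - 1) * (((x - a) powr \<theta> + (b - x) powr \<theta>) / (b - a)) * f (m * x)
   + lam * m powr (\<theta> - 1) * (((x - a) powr \<theta> * f (m * a) + (b - x) powr \<theta> * f (m * b)) / (b - a))
   - Gamma (\<theta> + 1) / (m * (b - a)) * (RL_left \<theta> f (m * a) (m * x) + RL_right \<theta> f (m * x) (m * b))"

definition A1 :: "real \<Rightarrow> real \<Rightarrow> real" where
  "A1 \<theta> lam = (2 * \<theta> * lam powr (1 + 1 / \<theta>) + 1) / (\<theta> + 1) - lam"

definition A2 :: "real \<Rightarrow> real \<Rightarrow> real \<Rightarrow> real" where
  "A2 \<alpha> \<theta> lam = 2 * \<theta> * lam powr (1 + (1 + \<alpha>) / \<theta>) / ((\<alpha> + 1) * (\<alpha> + \<theta> + 1))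
     + 1 / (\<alpha> + \<theta> + 1) - lam / (\<alpha> + 1)"

definition A3 :: "real \<Rightarrow> real \<Rightarrow> real \<Rightarrow> real" where
  "A3 \<alpha> \<theta> lam = A1 \<theta> lam - A2 \<alpha> \<theta> lam"

end

theory Submission
  imports Defs
begin

lemma ftc_powr_piece:
  fixes lam \<theta> \<beta> c d sg :: real
  assumes "\<theta> > 0" "\<beta> \<ge> 0" "0 \<le> c" "c \<le> d"
  defines "F \<equiv> \<lambda>t. lam * t powr (\<beta>+1) / (\<beta>+1) - t powr (\<theta>+\<beta>+1) / (\<theta>+\<beta>+1)"
  shows "((\<lambda>t. (lam - t powr \<theta>) * t powr \<beta>) has_integral (F d - F c)) {c..d}"
proof (rule fundamental_theorem_of_calculus_interior)
  show "c \<le> d" by fact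
  show "continuous_on {c..d} F" unfolding F_def
    using assms by (intro continuous_intros continuous_on_powr') auto
  fix t assume t: "t \<in> {c<..<d}"
  hence tp: "t > 0" using assms by auto
  have "(F has_real_derivative (lam * ((\<beta>+1) * t powr (\<beta>+1-1)) / (\<beta>+1) - ((\<theta>+\<beta>+1) * t powr (\<theta>+\<beta>+1-1)) / (\<theta>+\<beta>+1))) (at t)"
    unfolding F_def
    by (intro DERIV_diff DERIV_cdivide DERIV_cmult has_real_derivative_powr tp)
  moreover have "lam * ((\<beta>+1) * t powr (\<beta>+1-1)) / (\<beta>+1) - ((\<theta>+\<beta>+1) * t powr (\<theta>+\<beta>+1-1)) / (\<theta>+\<beta>+1)
     = (lam - t powr \<theta>) * t powr \<beta>"
  proof -
    have h1: "\<beta>+1 \<noteq> 0" "\<theta>+\<beta>+1 \<noteq> 0" using assms by auto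
    have "lam * ((\<beta>+1) * t powr (\<beta>+1-1)) / (\<beta>+1) = lam * t powr \<beta>" using h1 by simp
    moreover have "((\<theta>+\<beta>+1) * t powr (\<theta>+\<beta>+1-1)) / (\<theta>+\<beta>+1) = t powr \<theta> * t powr \<beta>"
      using h1 by (simp add: powr_add)
    ultimately show ?thesis by (simp add: algebra_simps)
  qed
  ultimately show "(F has_vector_derivative (lam - t powr \<theta>) * t powr \<beta>) (at t)"
    by (simp add: has_real_derivative_iff_has_vector_derivative)
qed

lemma pow00_pos: "t > 0 \<Longrightarrow> pow00 t b = t powr b"
  by (simp add: pow00_def)

lemma K01:
  fixes lam \<theta> \<beta> :: real
  assumes th: "\<theta> > 0" and b: "\<beta> \<ge> 0" and l: "0 \<le> lam" "lam \<le> 1"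
  shows "((\<lambda>t. \<bar>t powr \<theta> - lam\<bar> * pow00 t \<beta>) has_integral
     (2 * \<theta> * lam powr (1 + (1 + \<beta>) / \<theta>) / ((\<beta> + 1) * (\<beta> + \<theta> + 1)) + 1 / (\<beta> + \<theta> + 1) - lam / (\<beta> + 1))) {0..1}"
proof -
  define F where "F \<equiv> \<lambda>t. lam * t powr (\<beta>+1) / (\<beta>+1) - t powr (\<theta>+\<beta>+1) / (\<theta>+\<beta>+1)"
  define c where "c = lam powr (1/\<theta>)"
  have c0: "0 \<le> c" unfolding c_def by simp
  have c1: "c \<le> 1" unfolding c_def using l th by (simp add: powr_le1)
  have cth: "c powr \<theta> = lam" unfolding c_def using l th by (simp add: powr_powr)
  have A: "((\<lambda>t. (lam - t powr \<theta>) * t powr \<beta>) has_integral (F c - F 0)) {0..c}"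
    unfolding F_def using ftc_powr_piece[OF th b order_refl c0] by simp
  have B: "((\<lambda>t. (lam - t powr \<theta>) * t powr \<beta>) has_integral (F 1 - F c)) {c..1}"
    unfolding F_def using ftc_powr_piece[OF th b c0 c1] by simp
  have eA: "\<bar>t powr \<theta> - lam\<bar> * pow00 t \<beta> = (lam - t powr \<theta>) * t powr \<beta>" if t: "t \<in> box 0 c" for t
  proof -
    have t: "0 < t" "t < c" using t by auto
    have "t powr \<theta> \<le> c powr \<theta>" using t th by (intro powr_mono2) auto
    thus ?thesis using t cth by (simp add: pow00_pos)
  qed
  have A': "((\<lambda>t. \<bar>t powr \<theta> - lam\<bar> * pow00 t \<beta>) has_integral (F c - F 0)) {0..c}"
    using has_integral_spike_interior[of "\<lambda>t. (lam - t powr \<theta>) * t powr \<beta>" _ 0 c] A eA by simp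
  have eB: "\<bar>t powr \<theta> - lam\<bar> * pow00 t \<beta> = - ((lam - t powr \<theta>) * t powr \<beta>)" if t: "t \<in> box c 1" for t
  proof -
    have t: "c < t" "t < 1" using t by auto
    have "c powr \<theta> \<le> t powr \<theta>" using t th c0 by (intro powr_mono2) auto
    thus ?thesis using t cth c0 by (simp add: pow00_pos algebra_simps)
  qed
  have B': "((\<lambda>t. \<bar>t powr \<theta> - lam\<bar> * pow00 t \<beta>) has_integral (F c - F 1)) {c..1}"
    using has_integral_spike_interior[of "\<lambda>t. - ((lam - t powr \<theta>) * t powr \<beta>)" _ c 1] has_integral_neg[OF B] eB by simp
  have C: "((\<lambda>t. \<bar>t powr \<theta> - lam\<bar> * pow00 t \<beta>) has_integral (2 * F c - F 0 - F 1)) {0..1}"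
    using has_integral_combine[OF c0 c1 A' B'] by (simp add: algebra_simps)
  have F0: "F 0 = 0" unfolding F_def using th b by simp
  have F1: "F 1 = lam / (\<beta>+1) - 1 / (\<theta>+\<beta>+1)" unfolding F_def by simp
  define L where "L = lam powr (1 + (1 + \<beta>) / \<theta>)"
  have cb1: "lam * c powr (\<beta>+1) = L"
  proof (cases "lam = 0")
    case True thus ?thesis unfolding L_def c_def using th b by simp
  next
    case False
    hence "lam > 0" using l by simp
    thus ?thesis unfolding L_def c_def using th
      by (simp add: powr_powr powr_add add_divide_distrib)
  qed
  have cb2: "c powr (\<theta>+\<beta>+1) = L"
    unfolding L_def c_def using th l by (simp add: powr_powr add_divide_distrib algebra_simps)
  have Fc: "F c = L / (\<beta>+1) - L / (\<theta>+\<beta>+1)"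
    unfolding F_def using cb1 cb2 by simp
  have "2 * F c - F 0 - F 1 = 2 * \<theta> * L / ((\<beta> + 1) * (\<beta> + \<theta> + 1)) + 1 / (\<beta> + \<theta> + 1) - lam / (\<beta> + 1)"
  proof -
    have n: "\<beta>+1 \<noteq> 0" "\<theta>+\<beta>+1 \<noteq> 0" "\<beta>+\<theta>+1 \<noteq> 0" using th b by auto
    have "1/(\<beta>+1) - 1/(\<theta>+\<beta>+1) = \<theta>/((\<beta>+1)*(\<beta>+\<theta>+1))" using n by (simp add: field_simps)
    moreover have "2 * F c = 2 * L * (1/(\<beta>+1) - 1/(\<theta>+\<beta>+1))" unfolding Fc by (simp add: algebra_simps)
    ultimately have "2 * F c = 2 * \<theta> * L / ((\<beta> + 1) * (\<beta> + \<theta> + 1))" by simp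
    moreover have "1/(\<theta>+\<beta>+1) = 1/(\<beta>+\<theta>+1)" by (simp add: add_ac)
    ultimately show ?thesis unfolding F0 F1 by simp
  qed
  thus ?thesis using C unfolding L_def by simp
qed


lemma scale_left:
  fixes k :: "real \<Rightarrow> real"
  assumes "(k has_integral J) {0..1}" "L > 0"
  shows "((\<lambda>s. k ((s - p) / L)) has_integral (L * J)) {p..p+L}"
proof -
  have "((\<lambda>x. k ((1/L) *\<^sub>R x + (- p/L))) has_integral (J /\<^sub>R (1/L) ^ DIM(real)))
           (cbox ((0 - (- p/L)) /\<^sub>R (1/L)) ((1 - (- p/L)) /\<^sub>R (1/L)))"
    using has_integral_affinity'[of k J 0 1 "1/L" "- p/L"] assms by simp
  moreover have "(\<lambda>x. k ((1/L) *\<^sub>R x + (- p/L))) = (\<lambda>s. k ((s - p) / L))"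
    by (auto simp: diff_divide_distrib)
  moreover have "cbox ((0 - (- p/L)) /\<^sub>R (1/L)) ((1 - (- p/L)) /\<^sub>R (1/L)) = {p..p+L}"
    using assms by (simp add: field_simps)
  ultimately show ?thesis using assms by (simp add: mult.commute)
qed

lemma scale_right:
  fixes k :: "real \<Rightarrow> real"
  assumes "(k has_integral J) {0..1}" "L > 0"
  shows "((\<lambda>s. k ((q - s) / L)) has_integral (L * J)) {q-L..q}"
proof -
  have "((\<lambda>s. k ((s - (-q)) / L)) has_integral (L * J)) {-q..-q+L}"
    by (rule scale_left[OF assms])
  hence "((\<lambda>s. k ((- s - (-q)) / L)) has_integral (L * J)) {-(-q+L)..-(-q)}"
    by (subst has_integral_reflect_real)
  thus ?thesis by simp
qed


lemma cont_times_absint: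
  fixes g h :: "real \<Rightarrow> real"
  assumes "continuous_on {a..b} g" "h absolutely_integrable_on {a..b}"
  shows "(\<lambda>s. g s * h s) absolutely_integrable_on {a..b}"
proof (rule absolutely_integrable_bounded_measurable_product_real)
  show "g \<in> borel_measurable (lebesgue_on {a..b})"
    by (rule continuous_imp_measurable_on_sets_lebesgue[OF assms(1)]) auto
  show "{a..b} \<in> sets lebesgue" by auto
  show "bounded (g ` {a..b})"
    by (intro compact_imp_bounded compact_continuous_image assms(1)) auto
qed (fact assms(2))

lemma ibp_left:
  fixes f f' :: "real \<Rightarrow> real"
  assumes pu: "p \<le> u" and th: "\<theta> > 0"
    and der: "\<And>s. s \<in> {p..u} \<Longrightarrow> (f has_real_derivative f' s) (at s)"
    and ai: "f' absolutely_integrable_on {p..u}"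
  shows "((\<lambda>s. (s - p) powr (\<theta> - 1) * f s) has_integral
            (((u - p) powr \<theta> * f u - integral {p..u} (\<lambda>s. (s - p) powr \<theta> * f' s)) / \<theta>)) {p..u}"
proof -
  define H where "H = (\<lambda>s. (s - p) powr \<theta> * f s)"
  have fc: "continuous_on {p..u} f"
    using der by (meson DERIV_isCont continuous_at_imp_continuous_on)
  have Hc: "continuous_on {p..u} H" unfolding H_def
    using th by (intro continuous_intros continuous_on_powr' fc) auto
  have "((\<lambda>s. \<theta> * (s - p) powr (\<theta> - 1) * f s + (s - p) powr \<theta> * f' s) has_integral (H u - H p)) {p..u}"
  proof (rule fundamental_theorem_of_calculus_interior[OF pu Hc])
    fix s assume s: "s \<in> {p<..<u}"
    have d1: "((\<lambda>s. (s - p) powr \<theta>) has_real_derivative (\<theta> * (s - p) powr (\<theta> - 1) * 1)) (at s)"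
      using s by (intro DERIV_chain2[OF has_real_derivative_powr] derivative_eq_intros) auto
    have "(H has_real_derivative \<theta> * (s - p) powr (\<theta> - 1) * f s + (s - p) powr \<theta> * f' s) (at s)"
      unfolding H_def using s by (intro DERIV_cong[OF DERIV_mult[OF d1 der]]) (auto simp: algebra_simps)
    thus "(H has_vector_derivative \<theta> * (s - p) powr (\<theta> - 1) * f s + (s - p) powr \<theta> * f' s) (at s)"
      by (simp only: has_real_derivative_iff_has_vector_derivative)
  qed
  moreover have "((\<lambda>s. (s - p) powr \<theta> * f' s) has_integral integral {p..u} (\<lambda>s. (s - p) powr \<theta> * f' s)) {p..u}"
  proof -
    have pc: "continuous_on {p..u} (\<lambda>s. (s - p) powr \<theta>)" using th by (intro continuous_on_powr' continuous_intros) auto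
    show ?thesis using cont_times_absint[OF pc ai] by (intro integrable_integral set_lebesgue_integral_eq_integral(1))
  qed
  ultimately have "((\<lambda>s. \<theta> * (s - p) powr (\<theta> - 1) * f s) has_integral
       (H u - H p - integral {p..u} (\<lambda>s. (s - p) powr \<theta> * f' s))) {p..u}"
    by (drule_tac has_integral_diff) auto
  hence "((\<lambda>s. (1/\<theta>) * (\<theta> * (s - p) powr (\<theta> - 1) * f s)) has_integral
       ((1/\<theta>) * (H u - H p - integral {p..u} (\<lambda>s. (s - p) powr \<theta> * f' s)))) {p..u}"
    by (rule has_integral_mult_right)
  thus ?thesis using th unfolding H_def by (simp add: field_simps)
qed

lemma ibp_right:
  fixes f f' :: "real \<Rightarrow> real"
  assumes pu: "u \<le> q" and th: "\<theta> > 0"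
    and der: "\<And>s. s \<in> {u..q} \<Longrightarrow> (f has_real_derivative f' s) (at s)"
    and ai: "f' absolutely_integrable_on {u..q}"
  shows "((\<lambda>s. (q - s) powr (\<theta> - 1) * f s) has_integral
            (((q - u) powr \<theta> * f u + integral {u..q} (\<lambda>s. (q - s) powr \<theta> * f' s)) / \<theta>)) {u..q}"
proof -
  define H where "H = (\<lambda>s. (- ((q - s) powr \<theta>)) * f s)"
  have fc: "continuous_on {u..q} f"
    using der by (meson DERIV_isCont continuous_at_imp_continuous_on)
  have Hc: "continuous_on {u..q} H" unfolding H_def
    using th by (intro continuous_intros continuous_on_powr' fc) auto
  have "((\<lambda>s. \<theta> * (q - s) powr (\<theta> - 1) * f s - (q - s) powr \<theta> * f' s) has_integral (H q - H u)) {u..q}"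
  proof (rule fundamental_theorem_of_calculus_interior[OF pu Hc])
    fix s assume s: "s \<in> {u<..<q}"
    have d1: "((\<lambda>s. (q - s) powr \<theta>) has_real_derivative (\<theta> * (q - s) powr (\<theta> - 1) * (-1))) (at s)"
      using s by (intro DERIV_chain2[OF has_real_derivative_powr] derivative_eq_intros) auto
    have "(H has_real_derivative \<theta> * (q - s) powr (\<theta> - 1) * f s - (q - s) powr \<theta> * f' s) (at s)"
      unfolding H_def using s by (intro DERIV_cong[OF DERIV_mult[OF DERIV_minus[OF d1] der]]) (auto simp: algebra_simps)
    thus "(H has_vector_derivative \<theta> * (q - s) powr (\<theta> - 1) * f s - (q - s) powr \<theta> * f' s) (at s)"
      by (simp only: has_real_derivative_iff_has_vector_derivative)
  qed
  moreover have "((\<lambda>s. (q - s) powr \<theta> * f' s) has_integral integral {u..q} (\<lambda>s. (q - s) powr \<theta> * f' s)) {u..q}"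
  proof -
    have pc: "continuous_on {u..q} (\<lambda>s. (q - s) powr \<theta>)" using th by (intro continuous_on_powr' continuous_intros) auto
    show ?thesis using cont_times_absint[OF pc ai] by (intro integrable_integral set_lebesgue_integral_eq_integral(1))
  qed
  ultimately have "((\<lambda>s. \<theta> * (q - s) powr (\<theta> - 1) * f s) has_integral
       (H q - H u + integral {u..q} (\<lambda>s. (q - s) powr \<theta> * f' s))) {u..q}"
    by (drule_tac has_integral_add) auto
  hence "((\<lambda>s. (1/\<theta>) * (\<theta> * (q - s) powr (\<theta> - 1) * f s)) has_integral
       ((1/\<theta>) * (H q - H u + integral {u..q} (\<lambda>s. (q - s) powr \<theta> * f' s)))) {u..q}"
    by (rule has_integral_mult_right)
  thus ?thesis using th unfolding H_def by (simp add: field_simps)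
qed


lemma A1_K: assumes "\<theta> > 0" "0 \<le> lam" "lam \<le> 1"
  shows "((\<lambda>t. \<bar>t powr \<theta> - lam\<bar> * pow00 t 0) has_integral A1 \<theta> lam) {0..1}"
proof -
  have "A1 \<theta> lam = 2 * \<theta> * lam powr (1 + (1 + 0) / \<theta>) / ((0 + 1) * (0 + \<theta> + 1)) + 1 / (0 + \<theta> + 1) - lam / (0 + 1)"
    unfolding A1_def using assms by (simp add: add_divide_distrib)
  thus ?thesis using K01[OF assms(1) order_refl assms(2,3)] by simp
qed

lemma A2_K: assumes "\<theta> > 0" "0 \<le> lam" "lam \<le> 1" "0 \<le> \<alpha>"
  shows "((\<lambda>t. \<bar>t powr \<theta> - lam\<bar> * pow00 t \<alpha>) has_integral A2 \<alpha> \<theta> lam) {0..1}"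
  unfolding A2_def using K01[OF assms(1,4,2,3)] by simp

lemma pow00_zero: "pow00 t 0 = 1"
  by (simp add: pow00_def)


lemma bound_left:
  fixes f' :: "real \<Rightarrow> real"
  assumes pu: "p \<le> u" and th: "\<theta> > 0" and l: "0 \<le> lam" "lam \<le> 1" and al: "0 \<le> \<alpha>"
    and ai: "f' absolutely_integrable_on {p..u}"
    and cv: "\<And>s. s \<in> {p..u} \<Longrightarrow> p < u \<Longrightarrow>
       \<bar>f' s\<bar> \<le> pow00 ((s - p) / (u - p)) \<alpha> * G1 + (1 - pow00 ((s - p) / (u - p)) \<alpha>) * G2"
  shows "\<bar>integral {p..u} (\<lambda>s. ((s - p) powr \<theta> - lam * (u - p) powr \<theta>) * f' s)\<bar>
     \<le> (u - p) powr (\<theta> + 1) * (G1 * A2 \<alpha> \<theta> lam + G2 * A3 \<alpha> \<theta> lam)"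
proof (cases "p = u")
  case True thus ?thesis by simp
next
  case False
  define L where "L = u - p"
  have L: "L > 0" using False pu unfolding L_def by simp
  have uL: "u = p + L" unfolding L_def by simp
  define k1 where "k1 = (\<lambda>t::real. \<bar>t powr \<theta> - lam\<bar> * pow00 t 0)"
  define k2 where "k2 = (\<lambda>t::real. \<bar>t powr \<theta> - lam\<bar> * pow00 t \<alpha>)"
  have i1: "((\<lambda>s. k1 ((s - p) / L)) has_integral (L * A1 \<theta> lam)) {p..u}"
    unfolding uL k1_def by (rule scale_left[OF A1_K[OF th l] L])
  have i2: "((\<lambda>s. k2 ((s - p) / L)) has_integral (L * A2 \<alpha> \<theta> lam)) {p..u}"
    unfolding uL k2_def by (rule scale_left[OF A2_K[OF th l al] L])
  define B where "B = (\<lambda>s. L powr \<theta> * (G1 * k2 ((s - p) / L) + G2 * (k1 ((s - p) / L) - k2 ((s - p) / L))))"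
  have iB: "(B has_integral (L powr \<theta> * (G1 * (L * A2 \<alpha> \<theta> lam) + G2 * (L * A1 \<theta> lam - L * A2 \<alpha> \<theta> lam)))) {p..u}"
    unfolding B_def
    by (intro has_integral_mult_right has_integral_add has_integral_diff i1 i2)
  have wc: "continuous_on {p..u} (\<lambda>s. (s - p) powr \<theta> - lam * (u - p) powr \<theta>)"
    using th by (intro continuous_intros continuous_on_powr') auto
  have wi: "(\<lambda>s. ((s - p) powr \<theta> - lam * (u - p) powr \<theta>) * f' s) integrable_on {p..u}"
    using cont_times_absint[OF wc ai] by (rule set_lebesgue_integral_eq_integral(1))
  have le: "norm (((s - p) powr \<theta> - lam * (u - p) powr \<theta>) * f' s) \<le> B s" if s: "s \<in> {p..u}" for s
  proof -
    define t where "t = (s - p) / L"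
    have t0: "t \<ge> 0" using s L unfolding t_def by auto
    have sp: "s - p = t * L" unfolding t_def using L by simp
    have w: "(s - p) powr \<theta> - lam * (u - p) powr \<theta> = L powr \<theta> * (t powr \<theta> - lam)"
      unfolding sp L_def[symmetric] using t0 L by (simp add: powr_mult algebra_simps)
    have c: "\<bar>f' s\<bar> \<le> pow00 t \<alpha> * G1 + (1 - pow00 t \<alpha>) * G2"
      using cv[OF s] L unfolding t_def L_def by simp
    have "norm (((s - p) powr \<theta> - lam * (u - p) powr \<theta>) * f' s) = L powr \<theta> * (\<bar>t powr \<theta> - lam\<bar> * \<bar>f' s\<bar>)"
      unfolding w using L by (simp add: abs_mult)
    also have "\<dots> \<le> L powr \<theta> * (\<bar>t powr \<theta> - lam\<bar> * (pow00 t \<alpha> * G1 + (1 - pow00 t \<alpha>) * G2))"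
      by (intro mult_left_mono c) auto
    also have "\<dots> = B s" unfolding B_def k1_def k2_def t_def[symmetric] pow00_zero
      by (simp add: algebra_simps)
    finally show ?thesis .
  qed
  have "\<bar>integral {p..u} (\<lambda>s. ((s - p) powr \<theta> - lam * (u - p) powr \<theta>) * f' s)\<bar> \<le> integral {p..u} B"
    using integral_norm_bound_integral[OF wi has_integral_integrable[OF iB] le] by simp
  also have "\<dots> = L powr \<theta> * (G1 * (L * A2 \<alpha> \<theta> lam) + G2 * (L * A1 \<theta> lam - L * A2 \<alpha> \<theta> lam))"
    using iB by (rule integral_unique)
  also have "\<dots> = (u - p) powr (\<theta> + 1) * (G1 * A2 \<alpha> \<theta> lam + G2 * A3 \<alpha> \<theta> lam)"
    unfolding L_def[symmetric] A3_def using L by (simp add: powr_add algebra_simps)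
  finally show ?thesis .
qed

lemma bound_right:
  fixes f' :: "real \<Rightarrow> real"
  assumes pu: "u \<le> q" and th: "\<theta> > 0" and l: "0 \<le> lam" "lam \<le> 1" and al: "0 \<le> \<alpha>"
    and ai: "f' absolutely_integrable_on {u..q}"
    and cv: "\<And>s. s \<in> {u..q} \<Longrightarrow> u < q \<Longrightarrow>
       \<bar>f' s\<bar> \<le> pow00 ((q - s) / (q - u)) \<alpha> * G1 + (1 - pow00 ((q - s) / (q - u)) \<alpha>) * G2"
  shows "\<bar>integral {u..q} (\<lambda>s. ((q - s) powr \<theta> - lam * (q - u) powr \<theta>) * f' s)\<bar>
     \<le> (q - u) powr (\<theta> + 1) * (G1 * A2 \<alpha> \<theta> lam + G2 * A3 \<alpha> \<theta> lam)"
proof (cases "u = q")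
  case True thus ?thesis by simp
next
  case False
  define L where "L = q - u"
  have L: "L > 0" using False pu unfolding L_def by simp
  have uL: "u = q - L" unfolding L_def by simp
  define k1 where "k1 = (\<lambda>t::real. \<bar>t powr \<theta> - lam\<bar> * pow00 t 0)"
  define k2 where "k2 = (\<lambda>t::real. \<bar>t powr \<theta> - lam\<bar> * pow00 t \<alpha>)"
  have i1: "((\<lambda>s. k1 ((q - s) / L)) has_integral (L * A1 \<theta> lam)) {u..q}"
    unfolding uL k1_def by (rule scale_right[OF A1_K[OF th l] L])
  have i2: "((\<lambda>s. k2 ((q - s) / L)) has_integral (L * A2 \<alpha> \<theta> lam)) {u..q}"
    unfolding uL k2_def by (rule scale_right[OF A2_K[OF th l al] L])
  define B where "B = (\<lambda>s. L powr \<theta> * (G1 * k2 ((q - s) / L) + G2 * (k1 ((q - s) / L) - k2 ((q - s) / L))))"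
  have iB: "(B has_integral (L powr \<theta> * (G1 * (L * A2 \<alpha> \<theta> lam) + G2 * (L * A1 \<theta> lam - L * A2 \<alpha> \<theta> lam)))) {u..q}"
    unfolding B_def
    by (intro has_integral_mult_right has_integral_add has_integral_diff i1 i2)
  have wc: "continuous_on {u..q} (\<lambda>s. (q - s) powr \<theta> - lam * (q - u) powr \<theta>)"
    using th by (intro continuous_intros continuous_on_powr') auto
  have wi: "(\<lambda>s. ((q - s) powr \<theta> - lam * (q - u) powr \<theta>) * f' s) integrable_on {u..q}"
    using cont_times_absint[OF wc ai] by (rule set_lebesgue_integral_eq_integral(1))
  have le: "norm (((q - s) powr \<theta> - lam * (q - u) powr \<theta>) * f' s) \<le> B s" if s: "s \<in> {u..q}" for s
  proof -
    define t where "t = (q - s) / L"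
    have t0: "t \<ge> 0" using s L unfolding t_def by auto
    have sp: "q - s = t * L" unfolding t_def using L by simp
    have w: "(q - s) powr \<theta> - lam * (q - u) powr \<theta> = L powr \<theta> * (t powr \<theta> - lam)"
      unfolding sp L_def[symmetric] using t0 L by (simp add: powr_mult algebra_simps)
    have c: "\<bar>f' s\<bar> \<le> pow00 t \<alpha> * G1 + (1 - pow00 t \<alpha>) * G2"
      using cv[OF s] L unfolding t_def L_def by simp
    have "norm (((q - s) powr \<theta> - lam * (q - u) powr \<theta>) * f' s) = L powr \<theta> * (\<bar>t powr \<theta> - lam\<bar> * \<bar>f' s\<bar>)"
      unfolding w using L by (simp add: abs_mult)
    also have "\<dots> \<le> L powr \<theta> * (\<bar>t powr \<theta> - lam\<bar> * (pow00 t \<alpha> * G1 + (1 - pow00 t \<alpha>) * G2))"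
      by (intro mult_left_mono c) auto
    also have "\<dots> = B s" unfolding B_def k1_def k2_def t_def[symmetric] pow00_zero
      by (simp add: algebra_simps)
    finally show ?thesis .
  qed
  have "\<bar>integral {u..q} (\<lambda>s. ((q - s) powr \<theta> - lam * (q - u) powr \<theta>) * f' s)\<bar> \<le> integral {u..q} B"
    using integral_norm_bound_integral[OF wi has_integral_integrable[OF iB] le] by simp
  also have "\<dots> = L powr \<theta> * (G1 * (L * A2 \<alpha> \<theta> lam) + G2 * (L * A1 \<theta> lam - L * A2 \<alpha> \<theta> lam))"
    using iB by (rule integral_unique)
  also have "\<dots> = (q - u) powr (\<theta> + 1) * (G1 * A2 \<alpha> \<theta> lam + G2 * A3 \<alpha> \<theta> lam)"
    unfolding L_def[symmetric] A3_def using L by (simp add: powr_add algebra_simps)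
  finally show ?thesis .
qed


lemma lborel_to_abs:
  fixes g :: "real \<Rightarrow> real"
  assumes "set_integrable lborel S g"
  shows "g absolutely_integrable_on S"
proof -
  have i: "integrable lborel (\<lambda>x. indicator S x *\<^sub>R g x)" using assms unfolding set_integrable_def .
  have "(\<lambda>x. indicator S x *\<^sub>R g x) \<in> borel_measurable lborel" using i by (rule borel_measurable_integrable)
  hence "integrable (completion lborel) (\<lambda>x. indicator S x *\<^sub>R g x)" using i integrable_completion by blast
  thus ?thesis unfolding set_integrable_def .
qed

lemma S_alg:
  fixes m d G \<theta> lam M Pl Pr fu fp fq IL IR :: real
  assumes "m \<noteq> 0" "d \<noteq> 0" "G \<noteq> 0" "\<theta> \<noteq> 0"
  shows "(1-lam)*M*((Pl+Pr)/d)*fu + lam*M*((Pl*fp+Pr*fq)/d)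
     - \<theta>*G/(m*d) * (1/G*((m*M*Pl*fu - IL)/\<theta>) + 1/G*((m*M*Pr*fu+IR)/\<theta>))
   = ((IL - lam*(m*M*Pl)*(fu-fp)) - (IR - lam*(m*M*Pr)*(fq - fu)))/(m*d)"
proof -
  have e1: "\<theta>*G/(m*d) * (1/G*((m*M*Pl*fu - IL)/\<theta>) + 1/G*((m*M*Pr*fu+IR)/\<theta>))
      = ((m*M*Pl*fu - IL) + (m*M*Pr*fu+IR)) / (m*d)"
    using assms by (simp add: field_simps)
  have e2: "(1-lam)*M*((Pl+Pr)/d)*fu + lam*M*((Pl*fp+Pr*fq)/d)
      = ((1-lam)*m*M*(Pl+Pr)*fu + lam*m*M*(Pl*fp+Pr*fq)) / (m*d)"
    using assms by (simp add: field_simps)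
  show ?thesis unfolding e1 e2 diff_divide_distrib[symmetric]
    by (rule arg_cong[where f="\<lambda>z. z / (m*d)"]) (simp add: algebra_simps)
qed

theorem mainTheorem4:
  fixes I :: "real set" and f f' :: "real \<Rightarrow> real"
    and m \<alpha> a b x lam \<theta> :: real
  assumes I_int: "is_interval I" and I_nonneg: "I \<subseteq> {0..}"
    and f_deriv: "\<And>y. y \<in> interior I \<Longrightarrow> (f has_real_derivative f' y) (at y)"
    and m: "0 < m" "m \<le> 1"
    and \<alpha>: "0 \<le> \<alpha>" "\<alpha> \<le> 1"
    and ab: "a < b" "m * a \<in> interior I" "b \<in> interior I"
    and f'_int: "set_integrable lborel {m * a..m * b} f'"
    and conv: "alpha_m_convex_on \<alpha> m {m * a..b} (\<lambda>y. \<bar>f' y\<bar>)"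
    and x: "x \<in> {a..b}" and lam: "lam \<in> {0..1}" and \<theta>: "\<theta> > 0"
  shows "\<bar>S_f f m x lam \<theta> a b\<bar> \<le> m powr \<theta> / (b - a) *
     ((x - a) powr (\<theta> + 1) * (\<bar>f' (m * x)\<bar> * A2 \<alpha> \<theta> lam + m * \<bar>f' a\<bar> * A3 \<alpha> \<theta> lam)
    + (b - x) powr (\<theta> + 1) * (\<bar>f' (m * x)\<bar> * A2 \<alpha> \<theta> lam + m * \<bar>f' b\<bar> * A3 \<alpha> \<theta> lam))"
proof -
  define p where "p = m * a"
  define u where "u = m * x"
  define q where "q = m * b"
  have l: "0 \<le> lam" "lam \<le> 1" using lam by auto
  have xa: "a \<le> x" "x \<le> b" using x by auto
  have p0: "0 \<le> p" using ab(2) interior_subset I_nonneg unfolding p_def by auto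
  have a0: "0 \<le> a" using p0 m unfolding p_def by (simp add: zero_le_mult_iff)
  have pu: "p \<le> u" unfolding p_def u_def using xa m by simp
  have uq: "u \<le> q" unfolding q_def u_def using xa m by simp
  have pq: "p < q" unfolding p_def q_def using ab m by simp
  have qb: "q \<le> b" unfolding q_def using m a0 ab mult_right_mono[of m 1 b] by simp
  have ia: "is_interval (interior I)" using I_int by (simp add: is_interval_convex_1)
  have sub: "{p..b} \<subseteq> interior I"
    using ia ab(2,3) unfolding p_def[symmetric] is_interval_1 by (meson atLeastAtMost_iff subsetI)
  have der: "(f has_real_derivative f' s) (at s)" if s: "s \<in> {p..q}" for s
  proof -
    have "s \<in> {p..b}" using s qb by auto
    thus ?thesis by (rule f_deriv[OF subsetD[OF sub]])
  qed
  have ai: "f' absolutely_integrable_on {p..q}"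
    using lborel_to_abs[OF f'_int] unfolding p_def q_def .
  have aiL: "f' absolutely_integrable_on {p..u}"
    by (rule absolutely_integrable_on_subinterval[OF ai]) (use uq in auto)
  have aiR: "f' absolutely_integrable_on {u..q}"
    by (rule absolutely_integrable_on_subinterval[OF ai]) (use pu in auto)

  have derL: "(f has_real_derivative f' s) (at s)" if "s \<in> {p..u}" for s
    by (rule der) (use that uq in auto)
  have derR: "(f has_real_derivative f' s) (at s)" if "s \<in> {u..q}" for s
    by (rule der) (use that pu in auto)
  define IL where "IL = integral {p..u} (\<lambda>s. (s - p) powr \<theta> * f' s)"
  define IR where "IR = integral {u..q} (\<lambda>s. (q - s) powr \<theta> * f' s)"
  have RLl: "RL_left \<theta> f p u = (1 / Gamma \<theta>) * (((u - p) powr \<theta> * f u - IL) / \<theta>)"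
    unfolding RL_left_def IL_def using integral_unique[OF ibp_left[OF pu \<theta> derL aiL]] by simp
  have RLr: "RL_right \<theta> f u q = (1 / Gamma \<theta>) * (((q - u) powr \<theta> * f u + IR) / \<theta>)"
    unfolding RL_right_def IR_def using integral_unique[OF ibp_right[OF uq \<theta> derR aiR]] by simp
  have ftcL: "(f' has_integral (f u - f p)) {p..u}"
  proof (rule fundamental_theorem_of_calculus_interior[OF pu])
    show "continuous_on {p..u} f" using derL by (meson DERIV_isCont continuous_at_imp_continuous_on)
    fix s assume "s \<in> {p<..<u}"
    thus "(f has_vector_derivative f' s) (at s)" using derL[of s]
      by (simp add: has_real_derivative_iff_has_vector_derivative)
  qed
  have ftcR: "(f' has_integral (f q - f u)) {u..q}"
  proof (rule fundamental_theorem_of_calculus_interior[OF uq])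
    show "continuous_on {u..q} f" using derR by (meson DERIV_isCont continuous_at_imp_continuous_on)
    fix s assume "s \<in> {u<..<q}"
    thus "(f has_vector_derivative f' s) (at s)" using derR[of s]
      by (simp add: has_real_derivative_iff_has_vector_derivative)
  qed
  have hIL: "((\<lambda>s. (s - p) powr \<theta> * f' s) has_integral IL) {p..u}"
  proof -
    have pc: "continuous_on {p..u} (\<lambda>s. (s - p) powr \<theta>)" using \<theta> by (intro continuous_on_powr' continuous_intros) auto
    show ?thesis unfolding IL_def using cont_times_absint[OF pc aiL]
      by (intro integrable_integral set_lebesgue_integral_eq_integral(1))
  qed
  have hIR: "((\<lambda>s. (q - s) powr \<theta> * f' s) has_integral IR) {u..q}"
  proof -
    have pc: "continuous_on {u..q} (\<lambda>s. (q - s) powr \<theta>)" using \<theta> by (intro continuous_on_powr' continuous_intros) auto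
    show ?thesis unfolding IR_def using cont_times_absint[OF pc aiR]
      by (intro integrable_integral set_lebesgue_integral_eq_integral(1))
  qed
  define I1 where "I1 = integral {p..u} (\<lambda>s. ((s - p) powr \<theta> - lam * (u - p) powr \<theta>) * f' s)"
  define I2 where "I2 = integral {u..q} (\<lambda>s. ((q - s) powr \<theta> - lam * (q - u) powr \<theta>) * f' s)"
  have I1: "I1 = IL - lam * (u - p) powr \<theta> * (f u - f p)"
  proof -
    have "((\<lambda>s. (s - p) powr \<theta> * f' s - lam * (u - p) powr \<theta> * f' s) has_integral
          (IL - lam * (u - p) powr \<theta> * (f u - f p))) {p..u}"
      by (intro has_integral_diff hIL has_integral_mult_right ftcL)
    thus ?thesis unfolding I1_def by (simp add: integral_unique algebra_simps)
  qed
  have I2: "I2 = IR - lam * (q - u) powr \<theta> * (f q - f u)"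
  proof -
    have "((\<lambda>s. (q - s) powr \<theta> * f' s - lam * (q - u) powr \<theta> * f' s) has_integral
          (IR - lam * (q - u) powr \<theta> * (f q - f u))) {u..q}"
      by (intro has_integral_diff hIR has_integral_mult_right ftcR)
    thus ?thesis unfolding I2_def by (simp add: integral_unique algebra_simps)
  qed

  have nz: "\<theta> \<notin> \<int>\<^sub>\<le>\<^sub>0" using \<theta> nonpos_Ints_nonpos by force
  have Gam: "Gamma (\<theta> + 1) = \<theta> * Gamma \<theta>" by (rule Gamma_plus1[OF nz])
  have Gpos: "Gamma \<theta> > 0" using \<theta> by simp
  define M where "M = m powr (\<theta> - 1)"
  have mM: "m powr \<theta> = m * M"
  proof -
    have "m powr \<theta> = m powr (1 + (\<theta> - 1))" by simp
    also have "\<dots> = m powr 1 * m powr (\<theta> - 1)" by (rule powr_add)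
    finally show ?thesis unfolding M_def using m by simp
  qed
  have eL: "(u - p) powr \<theta> = m * M * (x - a) powr \<theta>"
  proof -
    have "u - p = m * (x - a)" unfolding u_def p_def by (simp add: algebra_simps)
    hence "(u - p) powr \<theta> = m powr \<theta> * (x - a) powr \<theta>" using m xa by (simp add: powr_mult)
    thus ?thesis using mM by simp
  qed
  have eR: "(q - u) powr \<theta> = m * M * (b - x) powr \<theta>"
  proof -
    have "q - u = m * (b - x)" unfolding u_def q_def by (simp add: algebra_simps)
    hence "(q - u) powr \<theta> = m powr \<theta> * (b - x) powr \<theta>" using m xa by (simp add: powr_mult)
    thus ?thesis using mM by simp
  qed
  have S: "S_f f m x lam \<theta> a b = (I1 - I2) / (m * (b - a))"
    unfolding S_f_def p_def[symmetric] u_def[symmetric] q_def[symmetric] M_def[symmetric] RLl RLr I1 I2 eL eR Gam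
  proof (rule S_alg)
    show "Gamma \<theta> \<noteq> 0" using Gpos by linarith
  qed (use \<theta> m ab in auto)
  have convI: "\<bar>f' (t * X + m * (1 - t) * Y)\<bar> \<le> pow00 t \<alpha> * \<bar>f' X\<bar> + m * (1 - pow00 t \<alpha>) * \<bar>f' Y\<bar>"
    if "X \<in> {p..b}" "Y \<in> {p..b}" "t \<in> {0..1}" "t * X + m * (1 - t) * Y \<in> {p..b}" for X Y t
    using conv that unfolding alpha_m_convex_on_def p_def by blast
  have aK: "a \<in> {p..b}" unfolding p_def using a0 m ab mult_right_mono[of m 1 a] by simp
  have bK: "b \<in> {p..b}" using pq qb by simp
  have uK: "u \<in> {p..b}" using pu uq qb by simp
  have bL: "\<bar>I1\<bar> \<le> (u - p) powr (\<theta> + 1) * (\<bar>f' u\<bar> * A2 \<alpha> \<theta> lam + (m * \<bar>f' a\<bar>) * A3 \<alpha> \<theta> lam)"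
    unfolding I1_def
  proof (rule bound_left[OF pu \<theta> l \<alpha>(1) aiL])
    fix s assume s: "s \<in> {p..u}" and lt: "p < u"
    define t where "t = (s - p) / (u - p)"
    have t01: "t \<in> {0..1}" unfolding t_def using s lt by (auto simp: divide_le_eq_1)
    have t1: "t * (u - p) = s - p" unfolding t_def using lt by simp
    have "t * u + m * (1 - t) * a = p + t * (u - p)" unfolding p_def by (simp add: algebra_simps)
    hence ts: "t * u + m * (1 - t) * a = s" using t1 by simp
    have "\<bar>f' s\<bar> \<le> pow00 t \<alpha> * \<bar>f' u\<bar> + m * (1 - pow00 t \<alpha>) * \<bar>f' a\<bar>"
      using convI[OF uK aK t01] ts s uq qb by simp
    thus "\<bar>f' s\<bar> \<le> pow00 ((s - p) / (u - p)) \<alpha> * \<bar>f' u\<bar> + (1 - pow00 ((s - p) / (u - p)) \<alpha>) * (m * \<bar>f' a\<bar>)"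
      unfolding t_def by (simp add: algebra_simps)
  qed
  have bR: "\<bar>I2\<bar> \<le> (q - u) powr (\<theta> + 1) * (\<bar>f' u\<bar> * A2 \<alpha> \<theta> lam + (m * \<bar>f' b\<bar>) * A3 \<alpha> \<theta> lam)"
    unfolding I2_def
  proof (rule bound_right[OF uq \<theta> l \<alpha>(1) aiR])
    fix s assume s: "s \<in> {u..q}" and lt: "u < q"
    define t where "t = (q - s) / (q - u)"
    have t01: "t \<in> {0..1}" unfolding t_def using s lt by (auto simp: divide_le_eq_1)
    have t1: "t * (q - u) = q - s" unfolding t_def using lt by simp
    have "t * u + m * (1 - t) * b = q - t * (q - u)" unfolding q_def by (simp add: algebra_simps)
    hence ts: "t * u + m * (1 - t) * b = s" using t1 by simp
    have "\<bar>f' s\<bar> \<le> pow00 t \<alpha> * \<bar>f' u\<bar> + m * (1 - pow00 t \<alpha>) * \<bar>f' b\<bar>"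
      using convI[OF uK bK t01] ts s pu qb by simp
    thus "\<bar>f' s\<bar> \<le> pow00 ((q - s) / (q - u)) \<alpha> * \<bar>f' u\<bar> + (1 - pow00 ((q - s) / (q - u)) \<alpha>) * (m * \<bar>f' b\<bar>)"
      unfolding t_def by (simp add: algebra_simps)
  qed
  have eL1: "(u - p) powr (\<theta> + 1) = m * m powr \<theta> * (x - a) powr (\<theta> + 1)"
  proof -
    have "u - p = m * (x - a)" unfolding u_def p_def by (simp add: algebra_simps)
    hence "(u - p) powr (\<theta> + 1) = m powr (\<theta> + 1) * (x - a) powr (\<theta> + 1)" using m xa by (simp add: powr_mult)
    thus ?thesis using m by (simp add: powr_add)
  qed
  have eR1: "(q - u) powr (\<theta> + 1) = m * m powr \<theta> * (b - x) powr (\<theta> + 1)"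
  proof -
    have "q - u = m * (b - x)" unfolding u_def q_def by (simp add: algebra_simps)
    hence "(q - u) powr (\<theta> + 1) = m powr (\<theta> + 1) * (b - x) powr (\<theta> + 1)" using m xa by (simp add: powr_mult)
    thus ?thesis using m by (simp add: powr_add)
  qed
  have den: "m * (b - a) > 0" using m ab by simp
  have "\<bar>S_f f m x lam \<theta> a b\<bar> = \<bar>I1 - I2\<bar> / (m * (b - a))" unfolding S using den by simp
  also have "\<dots> \<le> (\<bar>I1\<bar> + \<bar>I2\<bar>) / (m * (b - a))"
    using den by (intro divide_right_mono) auto
  also have "\<dots> \<le> ((u - p) powr (\<theta> + 1) * (\<bar>f' u\<bar> * A2 \<alpha> \<theta> lam + (m * \<bar>f' a\<bar>) * A3 \<alpha> \<theta> lam)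
      + (q - u) powr (\<theta> + 1) * (\<bar>f' u\<bar> * A2 \<alpha> \<theta> lam + (m * \<bar>f' b\<bar>) * A3 \<alpha> \<theta> lam)) / (m * (b - a))"
    using den bL bR by (intro divide_right_mono) auto
  also have "\<dots> = m powr \<theta> / (b - a) *
     ((x - a) powr (\<theta> + 1) * (\<bar>f' (m * x)\<bar> * A2 \<alpha> \<theta> lam + m * \<bar>f' a\<bar> * A3 \<alpha> \<theta> lam)
    + (b - x) powr (\<theta> + 1) * (\<bar>f' (m * x)\<bar> * A2 \<alpha> \<theta> lam + m * \<bar>f' b\<bar> * A3 \<alpha> \<theta> lam))"
    unfolding eL1 eR1 u_def[symmetric] using den m ab by (simp add: field_simps)
  finally show ?thesis .
qed


end
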